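(* Let $\alpha>0$, let $X_{0-}$ be a real-valued random variable and let $Z$ be a continuous stochastic process with $Z_0=0$, independent of $X_{0-}$, satisfying the crossing property (see context). For $\ell\in M$ define $X_t[\ell]=X_{0-}+Z_t-\alpha\ell_t$, $\tau[\ell]=\inf\{t\ge0:X_t[\ell]\le0\}$ and $\Gamma[\ell]_t=\mathbb{P}(\tau[\ell]\le t)$. Then the operator $\Gamma:M\to M$ is continuous.
   Context: Crossing property: for every stopping time $\tau$ with respect to the natural filtration of $X_{0-}+Z$ and every $h>0$, $\mathbb{P}(\tau<\infty,\ \inf_{0\le s\le h}(Z_{\tau+s}-Z_\tau)=0)=0$. $M$ is the set of càdlàg increasing functions $\ell:\overline{\mathbb{R}}\to[0,1]$ ($\overline{\mathbb{R}}$ the two-point compactification of $\mathbb{R}$) with $\ell_{0-}=0$ and $\ell_\infty=1$, with the topology: $\ell^n\to\ell$ iff $\ell^n_t\to\ell_t$ for all $t\in[0,\infty]$ at which $\ell$ is continuous. *)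

theory Defs
  imports "HOL-Probability.Probability"
begin

definition Mset :: "(ereal \<Rightarrow> real) set" where
  "Mset = {l. mono l \<and> (\<forall>t. 0 \<le> l t \<and> l t \<le> 1)
            \<and> (\<forall>t. continuous (at_right t) l)
            \<and> (\<forall>t. \<exists>L. (l \<longlongrightarrow> L) (at_left t))
            \<and> (l \<longlongrightarrow> 0) (at_left 0)
            \<and> l \<infinity> = 1}"

definition Mconv :: "(nat \<Rightarrow> ereal \<Rightarrow> real) \<Rightarrow> (ereal \<Rightarrow> real) \<Rightarrow> bool" where
  "Mconv ls l \<longleftrightarrow> (\<forall>t. 0 \<le> t \<longrightarrow> isCont l t \<longrightarrow> (\<lambda>n. ls n t) \<longlonglongrightarrow> l t)"

definition nat_filt :: "'w measure \<Rightarrow> (real \<Rightarrow> 'w \<Rightarrow> real) \<Rightarrow> real \<Rightarrow> 'w measure" where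
  "nat_filt P Y t = sigma (space P)
     {Y s -` B \<inter> space P | s B. 0 \<le> s \<and> s \<le> t \<and> B \<in> sets borel}"

definition is_stopping_time :: "'w measure \<Rightarrow> (real \<Rightarrow> 'w \<Rightarrow> real) \<Rightarrow> ('w \<Rightarrow> ereal) \<Rightarrow> bool" where
  "is_stopping_time P Y T \<longleftrightarrow> (\<forall>\<omega>\<in>space P. 0 \<le> T \<omega>) \<and>
     (\<forall>t::real. 0 \<le> t \<longrightarrow> {\<omega> \<in> space P. T \<omega> \<le> ereal t} \<in> sets (nat_filt P Y t))"

definition crossing_property :: "'w measure \<Rightarrow> ('w \<Rightarrow> real) \<Rightarrow> (real \<Rightarrow> 'w \<Rightarrow> real) \<Rightarrow> bool" where
  "crossing_property P X0 Z \<longleftrightarrow>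
     (\<forall>T h. is_stopping_time P (\<lambda>t \<omega>. X0 \<omega> + Z t \<omega>) T \<and> 0 < h \<longrightarrow>
        measure P {\<omega> \<in> space P. T \<omega> < \<infinity> \<and>
          (INF s\<in>{0..h}. Z (real_of_ereal (T \<omega>) + s) \<omega> - Z (real_of_ereal (T \<omega>)) \<omega>) = 0} = 0)"


definition tau :: "('w \<Rightarrow> real) \<Rightarrow> (real \<Rightarrow> 'w \<Rightarrow> real) \<Rightarrow> real \<Rightarrow> (ereal \<Rightarrow> real) \<Rightarrow> 'w \<Rightarrow> ereal" where
  "tau X0 Z \<alpha> l \<omega> = Inf {ereal t | t. 0 \<le> t \<and> X0 \<omega> + Z t \<omega> - \<alpha> * l (ereal t) \<le> 0}"

definition Gamma :: "'w measure \<Rightarrow> ('w \<Rightarrow> real) \<Rightarrow> (real \<Rightarrow> 'w \<Rightarrow> real) \<Rightarrow> real \<Rightarrow> (ereal \<Rightarrow> real) \<Rightarrow> ereal \<Rightarrow> real" where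
  "Gamma P X0 Z \<alpha> l t = measure P {\<omega> \<in> space P. tau X0 Z \<alpha> l \<omega> \<le> t}"

end

theory Submission
  imports Defs
begin


lemma Mset_D:
  assumes "l \<in> Mset"
  shows "mono l" "\<And>t. 0 \<le> l t" "\<And>t. l t \<le> 1" "\<And>t. continuous (at_right t) l"
    "l \<infinity> = 1"
  using assms unfolding Mset_def by auto

lemma Mset_right_real:
  assumes "l \<in> Mset"
  shows "((\<lambda>v. l (ereal v)) \<longlongrightarrow> l (ereal u)) (at_right u)"
proof -
  have "(l \<longlongrightarrow> l (ereal u)) (at_right (ereal u))"
    using Mset_D(4)[OF assms, of "ereal u"] by (simp add: continuous_within)
  then have "((l \<circ> ereal) \<longlongrightarrow> l (ereal u)) (at_right u)"
    by (simp add: tendsto_compose_filtermap at_right_ereal)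
  then show ?thesis by (simp add: o_def)
qed

lemma Mset_cont_point:
  assumes "l \<in> Mset" "a < b"
  shows "\<exists>c. a < c \<and> c < b \<and> isCont l (ereal c)"
proof -
  have "mono (l \<circ> ereal)"
    using Mset_D(1)[OF assms(1)] by (auto simp: mono_def)
  from mono_ctble_discont[OF this]
  have "countable {a. \<not> isCont (l \<circ> ereal) a}" .
  from open_minus_countable[OF this, of "{a<..<b}"] assms(2)
  obtain c where c: "a < c" "c < b" "isCont (l \<circ> ereal) c" by auto
  have "(l \<longlongrightarrow> l (ereal c)) (at (ereal c))"
    using c(3) by (simp add: isCont_def tendsto_compose_filtermap at_ereal)
  then show ?thesis using c by (auto simp: isCont_def)
qed

lemma core:
  fixes y :: "real \<Rightarrow> real"
  assumes a: "\<alpha> > 0" and l: "l \<in> Mset" and L: "\<And>j. L j \<in> Mset" and conv: "Mconv L l"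
    and y: "continuous_on {0..} y"
    and u0: "\<And>j. 0 \<le> u j" and ux: "u \<longlonglongrightarrow> x" and e0: "e \<longlonglongrightarrow> 0"
    and le: "\<And>j. y (u j) - \<alpha> * L j (ereal (u j)) \<le> e j"
  shows "y x - \<alpha> * l (ereal x) \<le> 0"
proof -
  have x0: "0 \<le> x" using LIMSEQ_le_const[OF ux] u0 by auto
  show ?thesis
  proof (rule field_le_epsilon)
    fix \<epsilon> :: real assume ep: "0 < \<epsilon>"
    define \<eta> where "\<eta> = \<epsilon> / (6 * \<alpha>)"
    have eta: "\<eta> > 0" "2 * \<alpha> * \<eta> = \<epsilon> / 3" using a ep by (auto simp: \<eta>_def)
    have "\<forall>\<^sub>F v in at_right x. l (ereal v) < l (ereal x) + \<eta>"
      using Mset_right_real[OF l, of x] eta(1) by (intro order_tendstoD) auto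
    then obtain b where b: "b > x" "\<And>v. x < v \<Longrightarrow> v < b \<Longrightarrow> l (ereal v) < l (ereal x) + \<eta>"
      using eventually_at_right[of x "x+1"] by auto
    obtain c where c: "x < c" "c < b" "isCont l (ereal c)" using Mset_cont_point[OF l b(1)] by blast
    have lc: "l (ereal c) < l (ereal x) + \<eta>" using b(2) c by auto
    have Lc: "(\<lambda>j. L j (ereal c)) \<longlonglongrightarrow> l (ereal c)"
      using conv c(3) x0 c(1) unfolding Mconv_def by auto
    have ev1: "\<forall>\<^sub>F j in sequentially. L j (ereal c) < l (ereal c) + \<eta>"
      using Lc eta(1) by (intro order_tendstoD) auto
    have ev2: "\<forall>\<^sub>F j in sequentially. u j < c" using ux c(1) by (rule order_tendstoD)
    have yu: "(\<lambda>j. y (u j)) \<longlonglongrightarrow> y x"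
      using continuous_on_tendsto_compose[OF y ux] x0 u0 by auto
    have ev3: "\<forall>\<^sub>F j in sequentially. y (u j) > y x - \<epsilon> / 3"
      using yu ep by (intro order_tendstoD) auto
    have ev4: "\<forall>\<^sub>F j in sequentially. e j < \<epsilon> / 3"
      using e0 ep by (intro order_tendstoD) auto
    from eventually_happens'[OF _ eventually_conj[OF ev1 eventually_conj[OF ev2 eventually_conj[OF ev3 ev4]]]]
    obtain j where j: "L j (ereal c) < l (ereal c) + \<eta>" "u j < c" "y (u j) > y x - \<epsilon> / 3" "e j < \<epsilon> / 3"
      by auto
    have "L j (ereal (u j)) \<le> L j (ereal c)"
      using Mset_D(1)[OF L[of j]] j(2) by (auto simp: mono_def)
    then have "L j (ereal (u j)) < l (ereal x) + 2 * \<eta>" using j(1) lc by linarith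
    then have "\<alpha> * L j (ereal (u j)) \<le> \<alpha> * l (ereal x) + 2 * \<alpha> * \<eta>"
      using a mult_left_mono[of "L j (ereal (u j))" "l (ereal x) + 2 * \<eta>" \<alpha>] by (simp add: algebra_simps)
    then show "y x - \<alpha> * l (ereal x) \<le> 0 + \<epsilon>"
      using le[of j] j(3,4) eta(2) by linarith
  qed
qed


definition hit :: "real \<Rightarrow> (real \<Rightarrow> real) \<Rightarrow> (ereal \<Rightarrow> real) \<Rightarrow> ereal" where
  "hit \<alpha> y l = Inf {ereal t | t. 0 \<le> t \<and> y t - \<alpha> * l (ereal t) \<le> 0}"

lemma tau_hit: "tau X0 Z \<alpha> l \<omega> = hit \<alpha> (\<lambda>t. X0 \<omega> + Z t \<omega>) l"
  by (simp add: tau_def hit_def)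

lemma hit_nonneg: "0 \<le> hit \<alpha> y l"
  by (auto simp: hit_def intro!: Inf_greatest)

lemma X_right:
  assumes l: "l \<in> Mset" and y: "continuous_on {0..} y" and r: "0 \<le> r"
  shows "((\<lambda>v. y v - \<alpha> * l (ereal v)) \<longlongrightarrow> y r - \<alpha> * l (ereal r)) (at_right r)"
proof -
  have "(y \<longlongrightarrow> y r) (at r within {0..})"
    using y r by (simp add: continuous_on_def)
  moreover have "at_right r \<le> at r within {0..}"
    using r by (intro at_le) auto
  ultimately have "(y \<longlongrightarrow> y r) (at_right r)" by (rule tendsto_mono[rotated])
  then show ?thesis using Mset_right_real[OF l, of r] by (intro tendsto_intros)
qed

lemma hit_attained:
  assumes l: "l \<in> Mset" and y: "continuous_on {0..} y" and h: "hit \<alpha> y l = ereal r"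
  shows "0 \<le> r" "y r - \<alpha> * l (ereal r) \<le> 0"
proof -
  show r0: "0 \<le> r" using hit_nonneg[of \<alpha> y l] h by simp
  show "y r - \<alpha> * l (ereal r) \<le> 0"
  proof (rule ccontr)
    assume "\<not> ?thesis"
    then have "\<forall>\<^sub>F v in at_right r. y v - \<alpha> * l (ereal v) > 0"
      using X_right[OF l y r0, of \<alpha>] by (intro order_tendstoD) auto
    then obtain b where b: "b > r" "\<And>v. r < v \<Longrightarrow> v < b \<Longrightarrow> y v - \<alpha> * l (ereal v) > 0"
      using eventually_at_right[of r "r+1"] by auto
    have "hit \<alpha> y l < ereal b" using h b by simp
    then obtain s where s: "s \<in> {ereal t | t. 0 \<le> t \<and> y t - \<alpha> * l (ereal t) \<le> 0}" "s < ereal b"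
      unfolding hit_def Inf_less_iff by blast
    then obtain t where t: "s = ereal t" "0 \<le> t" "y t - \<alpha> * l (ereal t) \<le> 0" by auto
    have "hit \<alpha> y l \<le> s" unfolding hit_def using s(1) by (rule Inf_lower)
    then have "r \<le> t" using h t by simp
    then show False using b(2)[of t] t s(2) \<open>\<not> _\<close> by (cases "r = t") force+
  qed
qed

lemma hit_le_iff:
  assumes l: "l \<in> Mset" and y: "continuous_on {0..} y"
  shows "hit \<alpha> y l \<le> ereal t \<longleftrightarrow> (\<exists>s. 0 \<le> s \<and> s \<le> t \<and> y s - \<alpha> * l (ereal s) \<le> 0)"
proof
  assume h: "hit \<alpha> y l \<le> ereal t"
  then obtain r where r: "hit \<alpha> y l = ereal r"
    using hit_nonneg[of \<alpha> y l] by (cases "hit \<alpha> y l") auto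
  then show "\<exists>s. 0 \<le> s \<and> s \<le> t \<and> y s - \<alpha> * l (ereal s) \<le> 0"
    using hit_attained[OF l y r] h by auto
next
  assume "\<exists>s. 0 \<le> s \<and> s \<le> t \<and> y s - \<alpha> * l (ereal s) \<le> 0"
  then obtain s where s: "0 \<le> s" "s \<le> t" "y s - \<alpha> * l (ereal s) \<le> 0" by blast
  show "hit \<alpha> y l \<le> ereal t" unfolding hit_def
    by (rule Inf_lower2[of "ereal s"]) (use s in auto)
qed

lemma Mconv_const: "Mconv (\<lambda>_. l) l"
  by (simp add: Mconv_def)

lemma hit_countable:
  assumes a: "\<alpha> > 0" and l: "l \<in> Mset" and y: "continuous_on {0..} y" and t: "0 \<le> t"
  shows "hit \<alpha> y l \<le> ereal t \<longleftrightarrow>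
    (\<forall>k::nat. \<exists>q\<in>insert t (\<rat> \<inter> {0..t}). y q - \<alpha> * l (ereal q) < inverse (real (Suc k)))"
proof
  assume "hit \<alpha> y l \<le> ereal t"
  then obtain s where s: "0 \<le> s" "s \<le> t" "y s - \<alpha> * l (ereal s) \<le> 0"
    using hit_le_iff[OF l y] by blast
  show "\<forall>k::nat. \<exists>q\<in>insert t (\<rat> \<inter> {0..t}). y q - \<alpha> * l (ereal q) < inverse (real (Suc k))"
  proof
    fix k :: nat
    have ik: "inverse (real (Suc k)) > 0" by simp
    show "\<exists>q\<in>insert t (\<rat> \<inter> {0..t}). y q - \<alpha> * l (ereal q) < inverse (real (Suc k))"
    proof (cases "s = t")
      case True
      then have "y t - \<alpha> * l (ereal t) \<le> 0" using s by simp
      then have "y t - \<alpha> * l (ereal t) < inverse (real (Suc k))" using ik by (rule order.strict_trans1)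
      then show ?thesis by (intro bexI[of _ t]) auto
    next
      case False
      then have st: "s < t" using s by simp
      have "\<forall>\<^sub>F v in at_right s. y v - \<alpha> * l (ereal v) < inverse (real (Suc k))"
        by (rule order_tendstoD(2)[OF X_right[OF l y s(1), of \<alpha>] order.strict_trans1[OF s(3) ik]])
      then obtain b where b: "b > s" "\<And>v. s < v \<Longrightarrow> v < b \<Longrightarrow> y v - \<alpha> * l (ereal v) < inverse (real (Suc k))"
        using eventually_at_right[of s "s+1"] by auto
      obtain q where q: "q \<in> \<rat>" "s < q" "q < min b t" using Rats_dense_in_real[of s "min b t"] b st by auto
      then show ?thesis using b(2)[of q] s by auto
    qed
  qed
next
  assume H: "\<forall>k::nat. \<exists>q\<in>insert t (\<rat> \<inter> {0..t}). y q - \<alpha> * l (ereal q) < inverse (real (Suc k))"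
  then obtain q where q: "\<And>k. q k \<in> insert t (\<rat> \<inter> {0..t})"
      "\<And>k. y (q k) - \<alpha> * l (ereal (q k)) < inverse (real (Suc k))"
    by metis
  have "\<forall>k. q k \<in> {0..t}" using q(1) t by (metis IntE atLeastAtMost_iff insertE order_refl)
  from seq_compactE[OF compact_imp_seq_compact[OF compact_Icc] this]
  obtain x r where xr: "x \<in> {0..t}" "strict_mono r" "(q \<circ> r) \<longlonglongrightarrow> x" by blast
  have e0: "((\<lambda>k. inverse (real (Suc k))) \<circ> r) \<longlonglongrightarrow> 0"
    by (rule LIMSEQ_subseq_LIMSEQ[OF LIMSEQ_inverse_real_of_nat xr(2)])
  have "y x - \<alpha> * l (ereal x) \<le> 0"
    apply (rule core[OF a l _ Mconv_const y _ xr(3) e0])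
    using l q(2) \<open>\<forall>k. q k \<in> {0..t}\<close> less_imp_le by auto
  then show "hit \<alpha> y l \<le> ereal t" using hit_le_iff[OF l y] xr(1) by auto
qed


lemma Mconv_sub:
  assumes "Mconv L l" "filterlim g sequentially sequentially"
  shows "Mconv (\<lambda>j. L (g j)) l"
  using assms unfolding Mconv_def
  by (auto intro: filterlim_compose[of "\<lambda>n. L n _"])

lemma hit_LB:
  assumes a: "\<alpha> > 0" and l: "l \<in> Mset" and L: "\<And>j. L j \<in> Mset" and conv: "Mconv L l"
    and y: "continuous_on {0..} y" and t: "0 \<le> t" and h: "hit \<alpha> y l > ereal t"
  shows "\<forall>\<^sub>F n in sequentially. hit \<alpha> y (L n) > ereal t"
proof (rule ccontr)
  assume "\<not> ?thesis"
  then have "\<forall>N. \<exists>n\<ge>N. hit \<alpha> y (L n) \<le> ereal t"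
    unfolding eventually_sequentially by (auto simp: not_less)
  then obtain g where g: "\<And>N. g N \<ge> N" "\<And>N. hit \<alpha> y (L (g N)) \<le> ereal t" by metis
  have "\<forall>N. \<exists>s. 0 \<le> s \<and> s \<le> t \<and> y s - \<alpha> * L (g N) (ereal s) \<le> 0"
    using g(2) hit_le_iff[OF L y] by blast
  then obtain u where u: "\<And>N. 0 \<le> u N" "\<And>N. u N \<le> t" "\<And>N. y (u N) - \<alpha> * L (g N) (ereal (u N)) \<le> 0"
    by metis
  have "\<forall>N. u N \<in> {0..t}" using u by auto
  from seq_compactE[OF compact_imp_seq_compact[OF compact_Icc] this]
  obtain x r where xr: "x \<in> {0..t}" "strict_mono r" "(u \<circ> r) \<longlonglongrightarrow> x" by blast
  have fl: "filterlim (\<lambda>j. g (r j)) sequentially sequentially"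
  proof (rule filterlim_at_top_mono[OF filterlim_ident])
    show "\<forall>\<^sub>F x in sequentially. x \<le> g (r x)"
      using g(1) seq_suble[OF xr(2)] le_trans by (metis always_eventually)
  qed
  have "y x - \<alpha> * l (ereal x) \<le> 0"
    apply (rule core[OF a l _ Mconv_sub[OF conv fl] y _ xr(3) tendsto_const[of 0]])
    using L u by auto
  then have "hit \<alpha> y l \<le> ereal t" using hit_le_iff[OF l y] xr(1) by auto
  then show False using h by simp
qed

lemma hit_UB:
  assumes a: "\<alpha> > 0" and l: "l \<in> Mset" and L: "\<And>j. L j \<in> Mset" and conv: "Mconv L l"
    and y: "continuous_on {0..} y" and hr: "hit \<alpha> y l = ereal r"
    and cr: "\<And>h. h > 0 \<Longrightarrow> \<exists>u. 0 \<le> u \<and> u \<le> h \<and> y (r + u) < y r"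
    and rt: "r < t"
  shows "\<forall>\<^sub>F n in sequentially. hit \<alpha> y (L n) \<le> ereal t"
proof -
  have r0: "0 \<le> r" and Xr: "y r - \<alpha> * l (ereal r) \<le> 0" using hit_attained[OF l y hr] by auto
  obtain u where u: "0 \<le> u" "u \<le> t - r" "y (r + u) < y r" using cr[of "t - r"] rt by auto
  have "r + u \<in> {0..}" using r0 u by auto
  then obtain d where d: "d > 0" "\<And>v. v \<in> {0..} \<Longrightarrow> dist v (r + u) < d \<Longrightarrow> dist (y v) (y (r + u)) < y r - y (r + u)"
    using y u(3) unfolding continuous_on_iff by (metis diff_gt_0_iff_gt)
  have "max r (r + u - d) < min t (r + u + d)" using d u rt by auto
  then obtain c where c: "max r (r + u - d) < c" "c < min t (r + u + d)" "isCont l (ereal c)"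
    using Mset_cont_point[OF l] by blast
  have c0: "0 \<le> c" using c r0 by auto
  have "dist c (r + u) < d" using c by (auto simp: dist_real_def)
  then have "dist (y c) (y (r + u)) < y r - y (r + u)" using d(2)[of c] c0 by auto
  then have yc: "y c < y r" by (auto simp: dist_real_def)
  have "l (ereal r) \<le> l (ereal c)" using Mset_D(1)[OF l] c by (auto simp: mono_def)
  then have neg: "y c - \<alpha> * l (ereal c) < 0" using yc Xr a
    by (smt (verit, best) mult_left_mono)
  have "(\<lambda>n. L n (ereal c)) \<longlonglongrightarrow> l (ereal c)" using conv c(3) c0 unfolding Mconv_def by auto
  then have "(\<lambda>n. y c - \<alpha> * L n (ereal c)) \<longlonglongrightarrow> y c - \<alpha> * l (ereal c)" by (intro tendsto_intros)
  then have "\<forall>\<^sub>F n in sequentially. y c - \<alpha> * L n (ereal c) < 0" using neg by (rule order_tendstoD)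
  then show ?thesis
  proof (rule eventually_mono)
    fix n assume "y c - \<alpha> * L n (ereal c) < 0"
    then have "hit \<alpha> y (L n) \<le> ereal c" using hit_le_iff[OF L y] c0 by auto
    then show "hit \<alpha> y (L n) \<le> ereal t" using c by (auto intro: order_trans)
  qed
qed



lemma INF_zero_if_nonneg:
  fixes g :: "real \<Rightarrow> real"
  assumes h: "0 \<le> h" and nn: "\<And>s. s \<in> {0..h} \<Longrightarrow> 0 \<le> g s" and g0: "g 0 = 0"
  shows "(INF s\<in>{0..h}. g s) = 0"
proof (rule antisym)
  have "bdd_below (g ` {0..h})" using nn by (intro bdd_belowI2) auto
  then have "(INF s\<in>{0..h}. g s) \<le> g 0" by (rule cINF_lower) (use h in auto)
  then show "(INF s\<in>{0..h}. g s) \<le> 0" using g0 by simp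
next
  show "0 \<le> (INF s\<in>{0..h}. g s)" using h nn by (intro cINF_greatest) auto
qed

lemma INF_zero_iff:
  fixes g :: "real \<Rightarrow> real"
  assumes h: "0 < h" and c: "continuous_on {0..h} g" and g0: "g 0 = 0"
  shows "(INF s\<in>{0..h}. g s) = 0 \<longleftrightarrow> (\<forall>q\<in>\<rat> \<inter> {0..h}. 0 \<le> g q)"
proof
  assume I: "(INF s\<in>{0..h}. g s) = 0"
  have bdd: "bdd_below (g ` {0..h})"
    by (rule bounded_imp_bdd_below[OF compact_imp_bounded[OF compact_continuous_image[OF c compact_Icc]]])
  show "\<forall>q\<in>\<rat> \<inter> {0..h}. 0 \<le> g q"
  proof
    fix q assume "q \<in> \<rat> \<inter> {0..h}"
    then have "(INF s\<in>{0..h}. g s) \<le> g q" using bdd by (intro cINF_lower) auto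
    then show "0 \<le> g q" using I by simp
  qed
next
  assume Q: "\<forall>q\<in>\<rat> \<inter> {0..h}. 0 \<le> g q"
  have "0 \<le> g s" if s: "s \<in> {0..h}" for s
  proof (rule ccontr)
    assume neg: "\<not> 0 \<le> g s"
    obtain d where d: "d > 0" "\<And>v. v \<in> {0..h} \<Longrightarrow> dist v s < d \<Longrightarrow> dist (g v) (g s) < - g s"
      using c s neg unfolding continuous_on_iff by (metis neg_0_less_iff_less not_le)
    obtain q where q: "q \<in> \<rat>" "q \<in> {0..h}" "dist q s < d"
    proof (cases "s < h")
      case True
      obtain q where "q \<in> \<rat>" "s < q" "q < min h (s + d)" using Rats_dense_in_real[of s "min h (s+d)"] True d by auto
      then show ?thesis using that[of q] s by (auto simp: dist_real_def)
    next
      case False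
      then have "s = h" using s by auto
      obtain q where "q \<in> \<rat>" "max 0 (s - d) < q" "q < s" using Rats_dense_in_real[of "max 0 (s - d)" s] \<open>s = h\<close> h d by auto
      then show ?thesis using that[of q] s by (auto simp: dist_real_def)
    qed
    have "dist (g q) (g s) < - g s" using d(2) q by auto
    then have "g q < 0" by (auto simp: dist_real_def)
    moreover have "0 \<le> g q" using Q q(1,2) by blast
    ultimately show False by simp
  qed
  then show "(INF s\<in>{0..h}. g s) = 0" using INF_zero_if_nonneg[of h g] h g0 by auto
qed

context
  fixes P :: "'w measure" and X0 :: "'w \<Rightarrow> real" and Z :: "real \<Rightarrow> 'w \<Rightarrow> real" and \<alpha> :: real
  assumes prob: "prob_space P" and a: "\<alpha> > 0" and X0m: "X0 \<in> borel_measurable P"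
    and Zm: "\<And>t. 0 \<le> t \<Longrightarrow> Z t \<in> borel_measurable P"
    and cont: "\<And>\<omega>. \<omega> \<in> space P \<Longrightarrow> continuous_on {0..} (\<lambda>t. Z t \<omega>)"
begin

lemma ycont: "\<omega> \<in> space P \<Longrightarrow> continuous_on {0..} (\<lambda>t. X0 \<omega> + Z t \<omega>)"
  using cont by (intro continuous_on_add continuous_on_const) auto

lemma tau_set_gen:
  assumes l: "l \<in> Mset" and sp: "space N = space P" and t: "0 \<le> t"
    and gen: "\<And>q c. 0 \<le> q \<Longrightarrow> q \<le> t \<Longrightarrow> {\<omega>\<in>space P. X0 \<omega> + Z q \<omega> < c} \<in> sets N"
  shows "{\<omega>\<in>space P. tau X0 Z \<alpha> l \<omega> \<le> ereal t} \<in> sets N"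
proof -
  define D where "D = insert t (\<rat> \<inter> {0..t})"
  have D: "countable D" unfolding D_def by (auto intro: countable_rat)
  have "{\<omega>\<in>space P. tau X0 Z \<alpha> l \<omega> \<le> ereal t} =
     (\<Inter>k\<in>UNIV. \<Union>q\<in>D. {\<omega>\<in>space P. X0 \<omega> + Z q \<omega> < \<alpha> * l (ereal q) + inverse (real (Suc k))})"
  proof (intro set_eqI iffI)
    fix \<omega> assume "\<omega> \<in> {\<omega>\<in>space P. tau X0 Z \<alpha> l \<omega> \<le> ereal t}"
    then have w: "\<omega> \<in> space P" and h: "hit \<alpha> (\<lambda>t. X0 \<omega> + Z t \<omega>) l \<le> ereal t" by (auto simp: tau_hit)
    have "\<forall>k::nat. \<exists>q\<in>D. X0 \<omega> + Z q \<omega> - \<alpha> * l (ereal q) < inverse (real (Suc k))"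
      using h hit_countable[OF a l ycont[OF w] t] unfolding D_def by blast
    then show "\<omega> \<in> (\<Inter>k\<in>UNIV. \<Union>q\<in>D. {\<omega>\<in>space P. X0 \<omega> + Z q \<omega> < \<alpha> * l (ereal q) + inverse (real (Suc k))})"
      using w by (simp add: algebra_simps)
  next
    fix \<omega> assume "\<omega> \<in> (\<Inter>k\<in>UNIV. \<Union>q\<in>D. {\<omega>\<in>space P. X0 \<omega> + Z q \<omega> < \<alpha> * l (ereal q) + inverse (real (Suc k))})"
    then have w: "\<omega> \<in> space P" and
      H: "\<forall>k::nat. \<exists>q\<in>D. X0 \<omega> + Z q \<omega> - \<alpha> * l (ereal q) < inverse (real (Suc k))"
      by (simp_all add: algebra_simps)
    have "hit \<alpha> (\<lambda>t. X0 \<omega> + Z t \<omega>) l \<le> ereal t"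
      using H hit_countable[OF a l ycont[OF w] t] unfolding D_def by blast
    then show "\<omega> \<in> {\<omega>\<in>space P. tau X0 Z \<alpha> l \<omega> \<le> ereal t}"
      using w by (simp add: tau_hit)
  qed
  also have "\<dots> \<in> sets N"
  proof (intro sets.countable_INT' sets.countable_UN' D image_subsetI)
    fix k q assume "q \<in> D"
    then have "0 \<le> q" "q \<le> t" using t unfolding D_def by auto
    then show "{\<omega>\<in>space P. X0 \<omega> + Z q \<omega> < \<alpha> * l (ereal q) + inverse (real (Suc k))} \<in> sets N"
      by (rule gen)
  qed auto
  finally show ?thesis .
qed

lemma tau_set_P:
  assumes l: "l \<in> Mset" and t: "0 \<le> t"
  shows "{\<omega>\<in>space P. tau X0 Z \<alpha> l \<omega> \<le> ereal t} \<in> sets P"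
proof (rule tau_set_gen[OF l refl t])
  fix q c :: real assume "0 \<le> q"
  then have [measurable]: "Z q \<in> borel_measurable P" by (rule Zm)
  note X0m[measurable]
  show "{\<omega>\<in>space P. X0 \<omega> + Z q \<omega> < c} \<in> sets P" by measurable
qed

lemma stopping:
  assumes l: "l \<in> Mset"
  shows "is_stopping_time P (\<lambda>t \<omega>. X0 \<omega> + Z t \<omega>) (tau X0 Z \<alpha> l)"
  unfolding is_stopping_time_def
proof (intro conjI ballI allI impI)
  fix \<omega> show "0 \<le> tau X0 Z \<alpha> l \<omega>" by (simp add: tau_hit hit_nonneg)
next
  fix t :: real assume t: "0 \<le> t"
  let ?G = "{(\<lambda>\<omega>. X0 \<omega> + Z s \<omega>) -` B \<inter> space P | s B. 0 \<le> s \<and> s \<le> t \<and> B \<in> sets borel}"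
  have G: "?G \<subseteq> Pow (space P)" by (auto simp del: vimage_eq)
  have sp: "space (nat_filt P (\<lambda>t \<omega>. X0 \<omega> + Z t \<omega>) t) = space P"
    unfolding nat_filt_def by (rule space_measure_of[OF G])
  have ss: "sets (nat_filt P (\<lambda>t \<omega>. X0 \<omega> + Z t \<omega>) t) = sigma_sets (space P) ?G"
    unfolding nat_filt_def by (rule sets_measure_of[OF G])
  show "{\<omega> \<in> space P. tau X0 Z \<alpha> l \<omega> \<le> ereal t} \<in> sets (nat_filt P (\<lambda>t \<omega>. X0 \<omega> + Z t \<omega>) t)"
  proof (rule tau_set_gen[OF l sp t])
    fix q c :: real assume q: "0 \<le> q" "q \<le> t"
    have "{\<omega>\<in>space P. X0 \<omega> + Z q \<omega> < c} = (\<lambda>\<omega>. X0 \<omega> + Z q \<omega>) -` {..<c} \<inter> space P" by auto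
    also have "\<dots> \<in> ?G" using q by (intro CollectI exI[of _ q] exI[of _ "{..<c}"]) simp
    finally show "{\<omega>\<in>space P. X0 \<omega> + Z q \<omega> < c} \<in> sets (nat_filt P (\<lambda>t \<omega>. X0 \<omega> + Z t \<omega>) t)"
      unfolding ss by auto
  qed
qed

lemma tau_set_all:
  assumes l: "l \<in> Mset"
  shows "{\<omega>\<in>space P. tau X0 Z \<alpha> l \<omega> \<le> x} \<in> sets P"
proof (cases "x < 0")
  case True
  have "\<not> tau X0 Z \<alpha> l \<omega> \<le> x" for \<omega>
  proof -
    have "0 \<le> tau X0 Z \<alpha> l \<omega>" by (simp add: tau_hit hit_nonneg)
    then show ?thesis using True by (meson less_le_trans not_le)
  qed
  then show ?thesis by simp
next
  case False
  show ?thesis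
  proof (cases x)
    case (real t)
    then have "0 \<le> t" using False by simp
    then show ?thesis using tau_set_P[OF l] real by simp
  next
    case PInf then show ?thesis by simp
  next
    case MInf then show ?thesis using False by simp
  qed
qed

lemma tau_meas:
  assumes l: "l \<in> Mset"
  shows "tau X0 Z \<alpha> l \<in> borel_measurable P"
  by (rule borel_measurableI_le) (rule tau_set_all[OF l])

lemma comp_meas:
  assumes T: "T \<in> borel_measurable P" and T0: "\<And>\<omega>. 0 \<le> T \<omega>" and s: "0 \<le> s"
  shows "(\<lambda>\<omega>. Z (real_of_ereal (T \<omega>) + s) \<omega>) \<in> borel_measurable P"
proof -
  define R where "R \<omega> = real_of_ereal (T \<omega>)" for \<omega>
  have R[measurable]: "R \<in> borel_measurable P" unfolding R_def using T by measurable
  have R0: "0 \<le> R \<omega>" for \<omega> using T0[of \<omega>] unfolding R_def by (rule real_of_ereal_pos)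
  define f where "f m \<omega> = Z (max 0 (real_of_int \<lceil>2^m * R \<omega>\<rceil> / 2^m) + s) \<omega>" for m :: nat and \<omega>
  have fm: "f m \<in> borel_measurable P" for m
  proof -
    have "(\<lambda>\<omega>. Z (max 0 (real_of_int i / 2^m) + s) \<omega>) \<in> borel_measurable P" for i :: int
      using Zm[of "max 0 (real_of_int i / 2^m) + s"] s by simp
    moreover have "(\<lambda>\<omega>. \<lceil>2^m * R \<omega>\<rceil>) \<in> measurable P (count_space UNIV)" by measurable
    ultimately show ?thesis unfolding f_def
      by (rule measurable_compose_countable[where f="\<lambda>i \<omega>. Z (max 0 (real_of_int i / 2^m) + s) \<omega>"
            and g="\<lambda>\<omega>. \<lceil>2^m * R \<omega>\<rceil>"])
  qed
  have lim: "(\<lambda>m. f m \<omega>) \<longlonglongrightarrow> Z (R \<omega> + s) \<omega>" if w: "\<omega> \<in> space P" for \<omega>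
  proof -
    have b1: "R \<omega> \<le> real_of_int \<lceil>2^m * R \<omega>\<rceil> / 2^m" for m :: nat
    proof -
      have "2^m * R \<omega> \<le> real_of_int \<lceil>2^m * R \<omega>\<rceil>" by (rule le_of_int_ceiling)
      then show ?thesis by (subst pos_le_divide_eq) (simp_all add: mult.commute)
    qed
    have b2: "real_of_int \<lceil>2^m * R \<omega>\<rceil> / 2^m \<le> R \<omega> + (1/2)^m" for m :: nat
    proof -
      have "real_of_int \<lceil>2^m * R \<omega>\<rceil> \<le> 2^m * R \<omega> + 1" by (rule of_int_ceiling_le_add_one)
      then show ?thesis by (simp add: pos_divide_le_eq power_one_over field_simps)
    qed
    have "(\<lambda>m. R \<omega> + (1/2::real)^m) \<longlonglongrightarrow> R \<omega> + 0"
      by (intro tendsto_intros LIMSEQ_realpow_zero) auto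
    then have lim2: "(\<lambda>m. R \<omega> + (1/2::real)^m) \<longlonglongrightarrow> R \<omega>" by simp
    have c: "(\<lambda>m. real_of_int \<lceil>2^m * R \<omega>\<rceil> / 2^m) \<longlonglongrightarrow> R \<omega>"
      apply (rule tendsto_sandwich[of "\<lambda>_. R \<omega>" _ _ "\<lambda>m. R \<omega> + (1/2)^m"])
         apply (rule always_eventually, rule allI, rule b1)
        apply (rule always_eventually, rule allI, rule b2)
       apply (rule tendsto_const)
      apply (rule lim2)
      done
    have mx: "max 0 (real_of_int \<lceil>2^m * R \<omega>\<rceil> / 2^m) = real_of_int \<lceil>2^m * R \<omega>\<rceil> / 2^m" for m :: nat
      using b1[of m] R0[of \<omega>] by linarith
    have v: "(\<lambda>m. max 0 (real_of_int \<lceil>2^m * R \<omega>\<rceil> / 2^m) + s) \<longlonglongrightarrow> R \<omega> + s"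
      unfolding mx by (intro tendsto_intros c)
    show ?thesis unfolding f_def
      apply (rule continuous_on_tendsto_compose[OF cont[OF w] v])
       apply (simp add: R0 s)
      apply (rule always_eventually)
      using s by simp
  qed
  have "(\<lambda>\<omega>. Z (R \<omega> + s) \<omega>) \<in> borel_measurable P" by (rule borel_measurable_LIMSEQ_real[OF lim fm])
  then show ?thesis by (simp add: R_def)
qed

lemma Eh_sets:
  assumes l: "l \<in> Mset" and h: "0 < h"
  shows "{\<omega> \<in> space P. tau X0 Z \<alpha> l \<omega> < \<infinity> \<and>
          (INF s\<in>{0..h}. Z (real_of_ereal (tau X0 Z \<alpha> l \<omega>) + s) \<omega> - Z (real_of_ereal (tau X0 Z \<alpha> l \<omega>)) \<omega>) = 0} \<in> sets P"
proof -
  let ?T = "tau X0 Z \<alpha> l"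
  have T[measurable]: "?T \<in> borel_measurable P" by (rule tau_meas[OF l])
  have T0: "\<And>\<omega>. 0 \<le> ?T \<omega>" by (simp add: tau_hit hit_nonneg)
  have R0: "0 \<le> real_of_ereal (?T \<omega>)" for \<omega> by (rule real_of_ereal_pos[OF T0])
  let ?F = "\<lambda>q \<omega>. Z (real_of_ereal (?T \<omega>) + q) \<omega> - Z (real_of_ereal (?T \<omega>)) \<omega>"
  have "{\<omega> \<in> space P. ?T \<omega> < \<infinity> \<and> (INF s\<in>{0..h}. ?F s \<omega>) = 0} =
        {\<omega> \<in> space P. ?T \<omega> < \<infinity>} \<inter> (\<Inter>q\<in>\<rat> \<inter> {0..h}. {\<omega> \<in> space P. 0 \<le> ?F q \<omega>})"
  proof -
    have "(INF s\<in>{0..h}. ?F s \<omega>) = 0 \<longleftrightarrow> (\<forall>q\<in>\<rat> \<inter> {0..h}. 0 \<le> ?F q \<omega>)" if w: "\<omega> \<in> space P" for \<omega>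
    proof (rule INF_zero_iff[OF h])
      have "continuous_on {0..h} (\<lambda>s. Z (real_of_ereal (?T \<omega>) + s) \<omega>)"
        by (rule continuous_on_compose2[OF cont[OF w] continuous_on_add[OF continuous_on_const continuous_on_id]])
           (use R0[of \<omega>] in auto)
      then show "continuous_on {0..h} (\<lambda>s. ?F s \<omega>)"
        by (intro continuous_on_diff continuous_on_const)
    qed simp
    then show ?thesis by auto
  qed
  also have "\<dots> \<in> sets P"
  proof (intro sets.Int sets.countable_INT' image_subsetI)
    show "{\<omega> \<in> space P. ?T \<omega> < \<infinity>} \<in> sets P" by measurable
    show "countable (\<rat> \<inter> {0..h})" by (intro countable_Int1 countable_rat)
    show "\<rat> \<inter> {0..h} \<noteq> {}" using h by (auto intro: bexI[of _ 0])
    fix q assume "q \<in> \<rat> \<inter> {0..h}"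
    then have q: "0 \<le> q" by auto
    have [measurable]: "(\<lambda>\<omega>. Z (real_of_ereal (?T \<omega>) + q) \<omega>) \<in> borel_measurable P"
      by (rule comp_meas[OF T T0 q])
    have [measurable]: "(\<lambda>\<omega>. Z (real_of_ereal (?T \<omega>)) \<omega>) \<in> borel_measurable P"
      using comp_meas[OF T T0 order_refl] by simp
    show "{\<omega> \<in> space P. 0 \<le> ?F q \<omega>} \<in> sets P" by measurable
  qed
  finally show ?thesis .
qed

end



lemma mono_left_lim:
  fixes f :: "ereal \<Rightarrow> real"
  assumes m: "mono f" and b: "\<And>t. f t \<le> 1"
  shows "\<exists>L. (f \<longlongrightarrow> L) (at_left x)"
proof (cases "x = -\<infinity>")
  case True
  then have "at_left x = bot" using trivial_limit_at_left_bot[where 'a=ereal] by (simp add: bot_ereal_def)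
  then show ?thesis by auto
next
  case False
  then obtain v where v: "v < x" by (metis ereal_MInfty_lessI ereal_infty_less(2) ereal_less_eq(1) less_le_not_le linorder_cases)
  have ne: "f ` {..<x} \<noteq> {}" using v by auto
  have bdd: "bdd_above (f ` {..<x})" using b by (intro bdd_aboveI2) auto
  define L where "L = Sup (f ` {..<x})"
  have "(f \<longlongrightarrow> L) (at_left x)"
  proof (rule order_tendstoI)
    fix a assume "a < L"
    then obtain w where w: "w < x" "a < f w" unfolding L_def using less_cSup_iff[OF ne bdd] by auto
    show "\<forall>\<^sub>F y in at_left x. a < f y"
      unfolding eventually_at_left[OF w(1)]
      by (rule exI[of _ w]) (use w m in \<open>auto simp: mono_def intro: less_le_trans\<close>)
  next
    fix a assume "L < a"
    show "\<forall>\<^sub>F y in at_left x. f y < a"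
      unfolding eventually_at_left[OF v]
    proof (rule exI[of _ v], intro conjI allI impI)
      fix y assume "v < y" "y < x"
      then have "f y \<le> L" unfolding L_def using bdd by (intro cSup_upper) auto
      then show "f y < a" using \<open>L < a\<close> by simp
    qed (rule v)
  qed
  then show ?thesis by blast
qed

context
  fixes P :: "'w measure" and X0 :: "'w \<Rightarrow> real" and Z :: "real \<Rightarrow> 'w \<Rightarrow> real" and \<alpha> :: real
  assumes prob: "prob_space P" and a: "\<alpha> > 0" and X0m: "X0 \<in> borel_measurable P"
    and Zm: "\<And>t. 0 \<le> t \<Longrightarrow> Z t \<in> borel_measurable P"
    and cont: "\<And>\<omega>. \<omega> \<in> space P \<Longrightarrow> continuous_on {0..} (\<lambda>t. Z t \<omega>)"
begin

lemma tsa: "l \<in> Mset \<Longrightarrow> {\<omega>\<in>space P. tau X0 Z \<alpha> l \<omega> \<le> x} \<in> sets P"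
  by (rule tau_set_all[OF prob a X0m]) (auto intro: Zm cont)

interpretation prob_space P by (rule prob)

lemma tau_neg: "x < 0 \<Longrightarrow> \<not> tau X0 Z \<alpha> l \<omega> \<le> x"
proof -
  assume x: "x < 0"
  have "0 \<le> tau X0 Z \<alpha> l \<omega>" by (simp add: tau_hit hit_nonneg)
  then show ?thesis using x by (meson less_le_trans not_le)
qed

lemma Gamma_neg: "x < 0 \<Longrightarrow> Gamma P X0 Z \<alpha> l x = 0"
  unfolding Gamma_def using tau_neg by simp

lemma Gamma_inf: "Gamma P X0 Z \<alpha> l \<infinity> = 1"
  unfolding Gamma_def by (simp add: prob_space)

lemma Gamma_mono: "l \<in> Mset \<Longrightarrow> mono (Gamma P X0 Z \<alpha> l)"
  unfolding Gamma_def mono_def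
  by (intro allI impI finite_measure_mono tsa) (auto intro: order_trans)

lemma Gamma_Mset:
  assumes l: "l \<in> Mset"
  shows "Gamma P X0 Z \<alpha> l \<in> Mset"
proof -
  let ?F = "Gamma P X0 Z \<alpha> l"
  let ?S = "\<lambda>x. {\<omega>\<in>space P. tau X0 Z \<alpha> l \<omega> \<le> x}"
  have F: "?F x = measure P (?S x)" for x unfolding Gamma_def ..
  have m: "mono ?F" by (rule Gamma_mono[OF l])
  have b1: "?F x \<le> 1" for x unfolding F by (rule prob_le_1)
  have b0: "0 \<le> ?F x" for x unfolding F by (rule measure_nonneg)
  have rc: "continuous (at_right x) ?F" for x
  proof (cases x)
    case PInf
    then have "at_right x = bot" using trivial_limit_at_right_top[where 'a=ereal] by (simp add: top_ereal_def)
    then show ?thesis by (simp add: continuous_def)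
  next
    case MInf
    have "\<forall>\<^sub>F v in at_right x. ?F v = ?F x"
      using MInf by (subst eventually_at_right[of x 0]) (auto intro!: exI[of _ 0] simp: Gamma_neg)
    then show ?thesis unfolding continuous_within by (rule tendsto_eventually)
  next
    case (real t)
    show ?thesis
    proof (cases "t < 0")
      case True
      have "\<forall>\<^sub>F v in at_right x. ?F v = ?F x"
        using real True by (subst eventually_at_right[of x 0]) (auto intro!: exI[of _ 0] simp: Gamma_neg)
      then show ?thesis unfolding continuous_within by (rule tendsto_eventually)
    next
      case False
      then have t0: "0 \<le> t" by simp
      have "((?F \<circ> ereal) \<longlongrightarrow> ?F (ereal t)) (at_right t)"
      proof (rule order_tendstoI)
        fix a assume "a < ?F (ereal t)"
        show "\<forall>\<^sub>F v in at_right t. a < (?F \<circ> ereal) v"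
          using eventually_at_right_less[of t]
        proof (rule eventually_mono)
          fix v assume "t < v"
          then have "?F (ereal t) \<le> ?F (ereal v)" using m by (auto simp: mono_def)
          then show "a < (?F \<circ> ereal) v" using \<open>a < _\<close> by simp
        qed
      next
        fix a assume a1: "?F (ereal t) < a"
        have inter: "(\<Inter>n. ?S (ereal (t + inverse (real (Suc n))))) = ?S (ereal t)"
        proof (intro set_eqI iffI)
          fix \<omega> assume "\<omega> \<in> (\<Inter>n. ?S (ereal (t + inverse (real (Suc n)))))"
          then have w: "\<omega> \<in> space P" and le: "\<And>n. tau X0 Z \<alpha> l \<omega> \<le> ereal (t + inverse (real (Suc n)))" by auto
          have "tau X0 Z \<alpha> l \<omega> \<le> ereal t"
          proof (rule ccontr)
            assume "\<not> ?thesis"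
            then have lt: "ereal t < tau X0 Z \<alpha> l \<omega>" by simp
            obtain r where r: "tau X0 Z \<alpha> l \<omega> = ereal r" using le[of 0] lt by (cases "tau X0 Z \<alpha> l \<omega>") auto
            then have "t < r" using lt by simp
            then obtain n where "inverse (real (Suc n)) < r - t" using reals_Archimedean by (metis diff_gt_0_iff_gt)
            then show False using le[of n] r by simp
          qed
          then show "\<omega> \<in> ?S (ereal t)" using w by simp
        next
          fix \<omega> assume "\<omega> \<in> ?S (ereal t)"
          then show "\<omega> \<in> (\<Inter>n. ?S (ereal (t + inverse (real (Suc n)))))"
            by (auto intro: order_trans)
        qed
        have "(\<lambda>n. measure P (?S (ereal (t + inverse (real (Suc n)))))) \<longlonglongrightarrow> measure P (\<Inter>n. ?S (ereal (t + inverse (real (Suc n)))))"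
        proof (rule finite_Lim_measure_decseq)
          show "range (\<lambda>n. ?S (ereal (t + inverse (real (Suc n))))) \<subseteq> sets P" using tsa[OF l] by auto
          show "decseq (\<lambda>n. ?S (ereal (t + inverse (real (Suc n)))))"
            unfolding decseq_def by (auto intro: order_trans simp: field_simps)
        qed
        then have "(\<lambda>n. ?F (ereal (t + inverse (real (Suc n))))) \<longlonglongrightarrow> ?F (ereal t)"
          unfolding F inter .
        then have "\<forall>\<^sub>F n in sequentially. ?F (ereal (t + inverse (real (Suc n)))) < a" using a1
          by (rule order_tendstoD)
        then obtain n where n: "?F (ereal (t + inverse (real (Suc n)))) < a" by (auto simp: eventually_sequentially)
        have pos: "t < t + inverse (real (Suc n))" by simp
        show "\<forall>\<^sub>F v in at_right t. (?F \<circ> ereal) v < a"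
          unfolding eventually_at_right[OF pos]
        proof (rule exI[of _ "t + inverse (real (Suc n))"], intro conjI allI impI)
          fix v assume "t < v" "v < t + inverse (real (Suc n))"
          then have "?F (ereal v) \<le> ?F (ereal (t + inverse (real (Suc n))))" using m by (auto simp: mono_def)
          then show "(?F \<circ> ereal) v < a" using n by simp
        qed (rule pos)
      qed
      then show ?thesis unfolding continuous_within real
        by (simp add: tendsto_compose_filtermap at_right_ereal)
    qed
  qed
  have ll: "\<exists>L. (?F \<longlongrightarrow> L) (at_left x)" for x by (rule mono_left_lim[OF m b1])
  have l0: "(?F \<longlongrightarrow> 0) (at_left 0)"
  proof (rule tendsto_eventually)
    show "\<forall>\<^sub>F v in at_left 0. ?F v = 0"
      unfolding eventually_at_left[of "-1" "0::ereal", simplified]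
      by (auto intro!: exI[of _ "-1"] simp: Gamma_neg)
  qed
  show ?thesis unfolding Mset_def using m b0 b1 rc ll l0 Gamma_inf by auto
qed

lemma stp: "l \<in> Mset \<Longrightarrow> is_stopping_time P (\<lambda>t \<omega>. X0 \<omega> + Z t \<omega>) (tau X0 Z \<alpha> l)"
  by (rule stopping[OF prob a X0m]) (auto intro: Zm cont)

lemma Ehs: "l \<in> Mset \<Longrightarrow> 0 < h \<Longrightarrow> {\<omega> \<in> space P. tau X0 Z \<alpha> l \<omega> < \<infinity> \<and>
          (INF s\<in>{0..h}. Z (real_of_ereal (tau X0 Z \<alpha> l \<omega>) + s) \<omega> - Z (real_of_ereal (tau X0 Z \<alpha> l \<omega>)) \<omega>) = 0} \<in> sets P"
  by (rule Eh_sets[OF prob a X0m]) (auto intro: Zm cont)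

lemma bad_null:
  assumes cp: "crossing_property P X0 Z" and l: "l \<in> Mset" and h: "0 < h"
  shows "{\<omega> \<in> space P. tau X0 Z \<alpha> l \<omega> < \<infinity> \<and>
          (INF s\<in>{0..h}. Z (real_of_ereal (tau X0 Z \<alpha> l \<omega>) + s) \<omega> - Z (real_of_ereal (tau X0 Z \<alpha> l \<omega>)) \<omega>) = 0} \<in> null_sets P"
    (is "?E \<in> _")
proof -
  have "measure P ?E = 0" using cp stp[OF l] h unfolding crossing_property_def by blast
  moreover have "?E \<in> sets P" by (rule Ehs[OF l h])
  ultimately show ?thesis by (simp add: null_sets_def emeasure_eq_measure)
qed

lemma good:
  assumes w: "\<omega> \<in> space P" and l: "l \<in> Mset"
    and nb: "\<And>k. \<omega> \<notin> {\<omega> \<in> space P. tau X0 Z \<alpha> l \<omega> < \<infinity> \<and>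
          (INF s\<in>{0..inverse (real (Suc k))}. Z (real_of_ereal (tau X0 Z \<alpha> l \<omega>) + s) \<omega> - Z (real_of_ereal (tau X0 Z \<alpha> l \<omega>)) \<omega>) = 0}"
    and r: "tau X0 Z \<alpha> l \<omega> = ereal r" and h: "0 < h"
  shows "\<exists>u. 0 \<le> u \<and> u \<le> h \<and> X0 \<omega> + Z (r + u) \<omega> < X0 \<omega> + Z r \<omega>"
proof -
  obtain k where k: "inverse (real (Suc k)) < h" using reals_Archimedean[OF h] by blast
  have "(INF s\<in>{0..inverse (real (Suc k))}. Z (r + s) \<omega> - Z r \<omega>) \<noteq> 0"
    using nb[of k] w r by auto
  then have "\<exists>s\<in>{0..inverse (real (Suc k))}. \<not> 0 \<le> Z (r + s) \<omega> - Z r \<omega>"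
    using INF_zero_if_nonneg[of "inverse (real (Suc k))" "\<lambda>s. Z (r + s) \<omega> - Z r \<omega>"] by force
  then obtain s where "s \<in> {0..inverse (real (Suc k))}" "Z (r + s) \<omega> - Z r \<omega> < 0" by force
  then show ?thesis using k by (intro exI[of _ s]) auto
qed

lemma Gamma_conv:
  assumes cp: "crossing_property P X0 Z" and l: "l \<in> Mset" and L: "\<And>n. L n \<in> Mset"
    and conv: "Mconv L l" and t0: "0 \<le> t" and ic: "isCont (Gamma P X0 Z \<alpha> l) (ereal t)"
  shows "(\<lambda>n. Gamma P X0 Z \<alpha> (L n) (ereal t)) \<longlonglongrightarrow> Gamma P X0 Z \<alpha> l (ereal t)"
proof -
  let ?T = "tau X0 Z \<alpha> l"
  let ?S = "\<lambda>x. {\<omega>\<in>space P. ?T \<omega> \<le> x}"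
  let ?F = "Gamma P X0 Z \<alpha> l"
  have F: "?F x = measure P (?S x)" for x unfolding Gamma_def ..
  have un: "(\<Union>n. ?S (ereal (t - inverse (real (Suc n))))) = {\<omega>\<in>space P. ?T \<omega> < ereal t}"
  proof (intro set_eqI iffI)
    fix \<omega> assume "\<omega> \<in> (\<Union>n. ?S (ereal (t - inverse (real (Suc n)))))"
    then obtain n where "\<omega> \<in> space P" "?T \<omega> \<le> ereal (t - inverse (real (Suc n)))" by auto
    moreover have "ereal (t - inverse (real (Suc n))) < ereal t" by simp
    ultimately show "\<omega> \<in> {\<omega>\<in>space P. ?T \<omega> < ereal t}" by (auto intro: order.strict_trans1)
  next
    fix \<omega> assume "\<omega> \<in> {\<omega>\<in>space P. ?T \<omega> < ereal t}"
    then have w: "\<omega> \<in> space P" and lt: "?T \<omega> < ereal t" by auto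
    have "0 \<le> ?T \<omega>" by (simp add: tau_hit hit_nonneg)
    then obtain r where r: "?T \<omega> = ereal r" using lt by (cases "?T \<omega>") auto
    then have "r < t" using lt by simp
    then obtain n where "inverse (real (Suc n)) < t - r" using reals_Archimedean by (metis diff_gt_0_iff_gt)
    then have "?T \<omega> \<le> ereal (t - inverse (real (Suc n)))" using r by simp
    then show "\<omega> \<in> (\<Union>n. ?S (ereal (t - inverse (real (Suc n)))))" using w by auto
  qed
  have "(\<lambda>n. measure P (?S (ereal (t - inverse (real (Suc n)))))) \<longlonglongrightarrow> measure P (\<Union>n. ?S (ereal (t - inverse (real (Suc n)))))"
  proof (rule finite_Lim_measure_incseq)
    show "range (\<lambda>n. ?S (ereal (t - inverse (real (Suc n))))) \<subseteq> sets P" using tsa[OF l] by auto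
    show "incseq (\<lambda>n. ?S (ereal (t - inverse (real (Suc n)))))"
      unfolding incseq_def by (auto intro: order_trans simp: field_simps)
  qed
  then have lim1: "(\<lambda>n. ?F (ereal (t - inverse (real (Suc n))))) \<longlonglongrightarrow> measure P {\<omega>\<in>space P. ?T \<omega> < ereal t}"
    unfolding F un .
  have "(\<lambda>n. ereal (t - inverse (real (Suc n)))) \<longlonglongrightarrow> ereal t"
    unfolding lim_ereal using tendsto_diff[OF tendsto_const[of t] LIMSEQ_inverse_real_of_nat] by simp
  then have lim2: "(\<lambda>n. ?F (ereal (t - inverse (real (Suc n))))) \<longlonglongrightarrow> ?F (ereal t)"
    by (rule isCont_tendsto_compose[OF ic])
  have eqm: "measure P {\<omega>\<in>space P. ?T \<omega> < ereal t} = measure P (?S (ereal t))"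
    using LIMSEQ_unique[OF lim1 lim2] F by simp
  have lvl: "{\<omega>\<in>space P. ?T \<omega> = ereal t} = ?S (ereal t) - {\<omega>\<in>space P. ?T \<omega> < ereal t}" by auto
  have ltset: "{\<omega>\<in>space P. ?T \<omega> < ereal t} \<in> sets P"
  proof -
    have "range (\<lambda>n. ?S (ereal (t - inverse (real (Suc n))))) \<subseteq> sets P" using tsa[OF l] by auto
    then have "(\<Union>n. ?S (ereal (t - inverse (real (Suc n))))) \<in> sets P" by (rule sets.countable_UN)
    then show ?thesis unfolding un .
  qed
  have "measure P {\<omega>\<in>space P. ?T \<omega> = ereal t} = 0"
    unfolding lvl using eqm ltset tsa[OF l] by (subst finite_measure_Diff) auto
  moreover have "{\<omega>\<in>space P. ?T \<omega> = ereal t} \<in> sets P"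
    unfolding lvl using ltset tsa[OF l] by auto
  ultimately have null1: "{\<omega>\<in>space P. ?T \<omega> = ereal t} \<in> null_sets P"
    by (simp add: null_sets_def emeasure_eq_measure)
  let ?E = "\<lambda>k. {\<omega> \<in> space P. ?T \<omega> < \<infinity> \<and>
          (INF s\<in>{0..inverse (real (Suc k))}. Z (real_of_ereal (?T \<omega>) + s) \<omega> - Z (real_of_ereal (?T \<omega>)) \<omega>) = 0}"
  have null2: "(\<Union>k. ?E k) \<in> null_sets P"
    by (intro null_sets_UN bad_null[OF cp l]) simp
  let ?N = "{\<omega>\<in>space P. ?T \<omega> = ereal t} \<union> (\<Union>k. ?E k)"
  have nullN: "?N \<in> null_sets P" using null1 null2 by auto
  let ?Sn = "\<lambda>n. {\<omega>\<in>space P. tau X0 Z \<alpha> (L n) \<omega> \<le> ereal t}"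
  have AEc: "AE \<omega> in P. (\<lambda>n. indicator (?Sn n) \<omega> :: real) \<longlonglongrightarrow> indicator (?S (ereal t)) \<omega>"
  proof (rule AE_I'[OF nullN], rule subsetI, rule ccontr)
    fix \<omega> assume A: "\<omega> \<in> {\<omega> \<in> space P. \<not> (\<lambda>n. indicator (?Sn n) \<omega> :: real) \<longlonglongrightarrow> indicator (?S (ereal t)) \<omega>}"
      and B: "\<omega> \<notin> ?N"
    from A have w: "\<omega> \<in> space P" by blast
    from A have nconv: "\<not> (\<lambda>n. indicator (?Sn n) \<omega> :: real) \<longlonglongrightarrow> indicator (?S (ereal t)) \<omega>" by blast
    have B2: "\<omega> \<notin> (\<Union>k. ?E k)" using B by (rule contrapos_nn) (rule UnI2)
    have nb0: "\<omega> \<notin> ?E k" for k using B2 by (rule contrapos_nn) (rule UN_I[OF UNIV_I])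
    have B1: "\<omega> \<notin> {\<omega>\<in>space P. ?T \<omega> = ereal t}" using B by (rule contrapos_nn) (rule UnI1)
    have ne: "?T \<omega> \<noteq> ereal t" using B1 w by simp
    show False
    proof -
      let ?y = "\<lambda>s. X0 \<omega> + Z s \<omega>"
      have y: "continuous_on {0..} ?y" using ycont[OF prob a X0m Zm cont w] .
      show False
      proof (cases "?T \<omega> < ereal t")
        case True
        have "0 \<le> ?T \<omega>" by (simp add: tau_hit hit_nonneg)
        then obtain r where r: "?T \<omega> = ereal r" using True by (cases "?T \<omega>") auto
        then have rt: "r < t" using True by simp
        have cr: "\<exists>u. 0 \<le> u \<and> u \<le> h \<and> ?y (r + u) < ?y r" if "h > 0" for h
          using good[OF w l _ r that] nb0 by blast
        have "\<forall>\<^sub>F n in sequentially. hit \<alpha> ?y (L n) \<le> ereal t"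
          by (rule hit_UB[OF a l L conv y _ cr rt]) (use r in \<open>simp add: tau_hit\<close>)
        then have "\<forall>\<^sub>F n in sequentially. (indicator (?Sn n) \<omega> :: real) = indicator (?S (ereal t)) \<omega>"
          by eventually_elim (use w True in \<open>auto simp: tau_hit indicator_def\<close>)
        then have "(\<lambda>n. indicator (?Sn n) \<omega> :: real) \<longlonglongrightarrow> indicator (?S (ereal t)) \<omega>"
          by (rule tendsto_eventually)
        then show False using nconv by contradiction
      next
        case False
        then have gt: "ereal t < hit \<alpha> ?y l" using ne by (simp add: tau_hit)
        have "\<forall>\<^sub>F n in sequentially. hit \<alpha> ?y (L n) > ereal t"
          by (rule hit_LB[OF a l L conv y t0 gt])
        then have "\<forall>\<^sub>F n in sequentially. (indicator (?Sn n) \<omega> :: real) = indicator (?S (ereal t)) \<omega>"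
          by eventually_elim (use w gt in \<open>auto simp: tau_hit indicator_def\<close>)
        then have "(\<lambda>n. indicator (?Sn n) \<omega> :: real) \<longlonglongrightarrow> indicator (?S (ereal t)) \<omega>"
          by (rule tendsto_eventually)
        then show False using nconv by contradiction
      qed
    qed
  qed
  have "(\<lambda>n. integral\<^sup>L P (indicator (?Sn n) :: 'w \<Rightarrow> real)) \<longlonglongrightarrow> integral\<^sup>L P (indicator (?S (ereal t)))"
  proof (rule integral_dominated_convergence[where w="\<lambda>_. 1"])
    show "indicator (?S (ereal t)) \<in> borel_measurable P" using tsa[OF l] by simp
    show "\<And>n. indicator (?Sn n) \<in> borel_measurable P" using tsa[OF L] by simp
    show "integrable P (\<lambda>_. 1::real)" by simp
    show "AE x in P. (\<lambda>n. indicator (?Sn n) x :: real) \<longlonglongrightarrow> indicator (?S (ereal t)) x" by (rule AEc)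
    show "\<And>n. AE x in P. norm (indicator (?Sn n) x :: real) \<le> 1" by (auto simp: indicator_def)
  qed
  then show ?thesis unfolding Gamma_def integral_indicator by (simp add: Int_absorb2)
qed

end


theorem proposition2p2:
  fixes P :: "'w measure" and X0 :: "'w \<Rightarrow> real" and Z :: "real \<Rightarrow> 'w \<Rightarrow> real" and \<alpha> :: real
  assumes "prob_space P"
    and "\<alpha> > 0"
    and "X0 \<in> borel_measurable P"
    and "\<And>t. 0 \<le> t \<Longrightarrow> Z t \<in> borel_measurable P"
    and "\<And>\<omega>. \<omega> \<in> space P \<Longrightarrow> continuous_on {0..} (\<lambda>t. Z t \<omega>)"
    and "\<And>\<omega>. \<omega> \<in> space P \<Longrightarrow> Z 0 \<omega> = 0"
    and "prob_space.indep_set P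
           (sigma_sets (space P) {X0 -` A \<inter> space P | A. A \<in> sets borel})
           (sigma_sets (space P) {Z t -` A \<inter> space P | t A. 0 \<le> t \<and> A \<in> sets borel})"
    and "crossing_property P X0 Z"
  shows "(\<forall>l \<in> Mset. Gamma P X0 Z \<alpha> l \<in> Mset) \<and>
         (\<forall>ls l. (\<forall>n. ls n \<in> Mset) \<and> l \<in> Mset \<and> Mconv ls l \<longrightarrow>
            Mconv (\<lambda>n. Gamma P X0 Z \<alpha> (ls n)) (Gamma P X0 Z \<alpha> l))"
proof (intro conjI ballI allI impI)
  fix l assume l: "l \<in> Mset"
  show "Gamma P X0 Z \<alpha> l \<in> Mset"
    by (rule Gamma_Mset[OF assms(1,2,3)]) (auto intro: assms(4,5) l)
next
  fix ls l assume H: "(\<forall>n. ls n \<in> Mset) \<and> l \<in> Mset \<and> Mconv ls l"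
  then have L: "\<And>n. ls n \<in> Mset" and l: "l \<in> Mset" and conv: "Mconv ls l" by auto
  show "Mconv (\<lambda>n. Gamma P X0 Z \<alpha> (ls n)) (Gamma P X0 Z \<alpha> l)"
    unfolding Mconv_def
  proof (intro allI impI)
    fix x :: ereal assume x0: "0 \<le> x" and ic: "isCont (Gamma P X0 Z \<alpha> l) x"
    show "(\<lambda>n. Gamma P X0 Z \<alpha> (ls n) x) \<longlonglongrightarrow> Gamma P X0 Z \<alpha> l x"
    proof (cases x)
      case (real t)
      then have t0: "0 \<le> t" using x0 by simp
      show ?thesis unfolding real
        by (rule Gamma_conv[OF assms(1,2,3) _ _ assms(8) l L conv t0]) (use ic real in \<open>auto intro: assms(4,5)\<close>)
    next
      case PInf
      have "Gamma P X0 Z \<alpha> k \<infinity> = 1" for k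
        by (rule Gamma_inf[OF assms(1,2,3)]) (auto intro: assms(4,5))
      then show ?thesis using PInf by simp
    next
      case MInf
      then show ?thesis using x0 by simp
    qed
  qed
qed

end
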